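(* Let $\mathcal{A}$ be an $\ell_A$-quasi-cyclic code over $\mathbb{F}_q$ of length $n_A=\ell_A m_A$ and $\mathcal{B}$ an $\ell_B$-quasi-cyclic code over $\mathbb{F}_q$ of length $n_B=\ell_B m_B$, with $\gcd(n_A,n_B)=1$, and let integers $a,b$ satisfy $a n_A+b n_B=1$. Put $\ell=\ell_A\ell_B$, $m=m_Am_B$, $n=n_An_B$. Let $(m_{i,j})_{0\le i<n_B,\,0\le j<n_A}$ be an $n_B\times n_A$ matrix over $\mathbb{F}_q$ each of whose rows is in $\mathcal{A}$ and each of whose columns is in $\mathcal{B}$, and let $$c(X)\equiv\sum_{i=0}^{n_B-1}\sum_{j=0}^{n_A-1}m_{i,j}X^{\psi(i,j)}\pmod{X^n-1},\qquad \psi(i,j)=i a n_A\ell_A+j b n_B\ell_B \bmod n.$$ For $g\in\{0,\dots,\ell_B-1\}$, $h\in\{0,\dots,\ell_A-1\}$ define $$c_{g,h}(X)\equiv X^{\theta(g,h)}\sum_{i=0}^{m_B-1}\sum_{j=0}^{m_A-1}m_{i\ell_B+g,\,j\ell_A+h}X^{\chi(i,j)}\pmod{X^m-1},$$ where $\theta(g,h)=g(-b m_B)+h(-a m_A)\bmod m$ and $\chi(i,j)=i a n_A+j b n_B\bmod m$. Then $$c(X)\equiv\sum_{g=0}^{\ell_B-1}\sum_{h=0}^{\ell_A-1}c_{g,h}(X^{\ell_A\ell_B})X^{g\ell_A+h\ell_B}\pmod{X^n-1}.$$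
   Context: An $\ell$-quasi-cyclic code of length $\ell m$ over $\mathbb{F}_q$ is a linear code closed under cyclic shift of coordinates by $\ell$ positions. Exponents of $X$ are taken modulo the indicated modulus (so $X^{k}$ for negative $k$ means $X^{k\bmod m}$ modulo $X^m-1$, resp. modulo $n$ for $X^n-1$). *)

theory Defs
  imports "HOL-Computational_Algebra.Polynomial"
begin

definition linear_code :: "nat \<Rightarrow> 'a::field list set \<Rightarrow> bool" where
  "linear_code N C \<longleftrightarrow>
     (\<forall>c\<in>C. length c = N) \<and> replicate N 0 \<in> C \<and>
     (\<forall>x\<in>C. \<forall>y\<in>C. map2 (+) x y \<in> C) \<and>
     (\<forall>k. \<forall>x\<in>C. map ((*) k) x \<in> C)"

definition quasi_cyclic :: "nat \<Rightarrow> nat \<Rightarrow> 'a::field list set \<Rightarrow> bool" where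
  "quasi_cyclic l m C \<longleftrightarrow> linear_code (l * m) C \<and> (\<forall>c\<in>C. rotate l c \<in> C)"

definition pcong_xn :: "nat \<Rightarrow> 'a::comm_ring_1 poly \<Rightarrow> 'a poly \<Rightarrow> bool" where
  "pcong_xn N p q \<longleftrightarrow> (monom 1 N - 1) dvd (p - q)"

end

theory Submission imports Defs begin


lemma pcong_refl: "pcong_xn N p p" by (simp add: pcong_xn_def)

lemma pcong_sum: "(\<And>x. x \<in> S \<Longrightarrow> pcong_xn N (f x) (g x)) \<Longrightarrow> pcong_xn N (sum f S) (sum g S)"
  unfolding pcong_xn_def by (simp add: sum_subtractf[symmetric] dvd_sum)

lemma pcong_monom_add: "pcong_xn N (monom c (k + t * N)) (monom c k)"
proof -
  have "monom c (k + t*N) - monom c k = monom c k * ((monom 1 N)^t - 1)"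
    by (simp add: mult_monom monom_power algebra_simps mult.commute)
  moreover have "(monom 1 N - 1) dvd ((monom (1::'a) N)^t - 1)"
    by (simp add: power_diff_1_eq)
  ultimately show ?thesis unfolding pcong_xn_def by (metis dvd_mult)
qed

lemma pcong_monom: assumes "k mod N = k' mod N" shows "pcong_xn N (monom c k) (monom c k')"
proof -
  have "pcong_xn N (monom c (k mod N + (k div N) * N)) (monom c (k mod N))" by (rule pcong_monom_add)
  then have 1: "pcong_xn N (monom c k) (monom c (k mod N))" by (simp only: mod_div_mult_eq)
  have "pcong_xn N (monom c (k' mod N + (k' div N) * N)) (monom c (k' mod N))" by (rule pcong_monom_add)
  then have 2: "pcong_xn N (monom c k') (monom c (k mod N))" by (simp only: mod_div_mult_eq assms)
  from 1 2 show ?thesis unfolding pcong_xn_def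
    by (metis (no_types, lifting) dvd_diff diff_diff_eq2 diff_add_cancel diff_diff_cancel)
qed

lemma pcompose_monom_monom: "pcompose (monom c e) (monom (1::'a::comm_ring_1) d) = monom c (e*d)"
proof -
  have "monom c e = smult c (monom 1 1 ^ e)" by (simp add: monom_power smult_monom)
  moreover have "pcompose (monom 1 1) (monom (1::'a) d) = monom 1 d"
    by (simp add: monom_altdef pcompose_pCons)
  moreover have "\<And>q::'a poly. pcompose (monom 1 1 ^ k) q = (pcompose (monom 1 1) q) ^ k" for k
    by (induction k) (simp_all only: power_0 power_Suc pcompose_mult pcompose_1)
  ultimately have "pcompose (monom c e) (monom (1::'a) d) = smult c (monom 1 d ^ e)"
    by (simp only: pcompose_smult)
  also have "\<dots> = monom c (e*d)" by (simp add: monom_power smult_monom mult.commute)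
  finally show ?thesis .
qed

lemma sum_split: "(\<Sum>I<l*m. f I) = (\<Sum>g<(l::nat). \<Sum>i<m. f (i*l+g))"
proof (induction m)
  case 0 then show ?case by simp
next
  case (Suc m)
  have "{..<l * Suc m} = {..<l*m} \<union> {l*m..<l*m+l}" by auto
  then have "(\<Sum>I<l*Suc m. f I) = (\<Sum>I<l*m. f I) + (\<Sum>I\<in>{l*m..<l*m+l}. f I)"
    by (simp add: sum.union_disjoint ivl_disj_int)
  also have "(\<Sum>I\<in>{l*m..<l*m+l}. f I) = (\<Sum>g<l. f (m*l+g))"
    using sum.shift_bounds_nat_ivl[of f 0 "l*m" l, symmetric] by (simp add: atLeast0LessThan add.commute mult.commute)
  finally show ?case using Suc by (simp add: sum.distrib)
qed


lemma arith:
  fixes a b :: int and lA mA lB mB i j g h :: nat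
  assumes e: "a * int (lA * mA) + b * int (lB * mB) = 1"
    and pos: "0 < lA" "0 < mA" "0 < lB" "0 < mB"
  shows "nat ((int (i*lB+g) * a * int (lA * mA) * int lA + int (j*lA+h) * b * int (lB * mB) * int lB)
                mod int ((lA * mA) * (lB * mB))) mod ((lA * mA) * (lB * mB))
   = ((nat ((int g * (- b * int mB) + int h * (- a * int mA)) mod int (mA * mB))
       + nat ((int i * a * int (lA * mA) + int j * b * int (lB * mB)) mod int (mA * mB))) * (lA * lB)
      + (g * lA + h * lB)) mod ((lA * mA) * (lB * mB))"
proof -
  define th where "th = int g * (- b * int mB) + int h * (- a * int mA)"
  define ch where "ch = int i * a * int (lA * mA) + int j * b * int (lB * mB)"
  define eL where "eL = int (i*lB+g) * a * int (lA * mA) * int lA + int (j*lA+h) * b * int (lB * mB) * int lB"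
  define L where "L = int (lA*lB)"
  define s where "s = int (g * lA + h * lB)"
  define mm where "mm = int (mA*mB)"
  have nn: "int ((lA * mA) * (lB * mB)) = mm * L" unfolding mm_def L_def by simp
  have "eL = (th + ch) * L + s + int (g*lA + h*lB) * (a * int (lA * mA) + b * int (lB * mB) - 1)"
    unfolding eL_def th_def ch_def L_def s_def by (simp add: algebra_simps)
  then have eL: "eL = (th + ch) * L + s" using e by simp
  have mpos: "mm \<ge> 0" "L \<ge> 0" unfolding mm_def L_def by auto
  have mp: "mm > 0" unfolding mm_def using pos by simp
  have tc: "0 \<le> th mod mm" "0 \<le> ch mod mm" using mp by simp_all
  have "(th mod mm + ch mod mm) * L + s = ((th + ch) * L + s) + (- (th div mm + ch div mm)) * (mm * L)"
    by (simp add: algebra_simps minus_div_mult_eq_mod[symmetric])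
  then have "((th mod mm + ch mod mm) * L + s) mod (mm*L) = eL mod (mm*L)"
    using eL by (simp only: mod_mult_self1)
  then have key: "eL mod (mm*L) = ((th mod mm + ch mod mm) * L + s) mod (mm*L)" by simp
  have "int (nat (eL mod (mm*L)) mod ((lA * mA) * (lB * mB))) = eL mod (mm*L)"
  proof -
    define N where "N = (lA * mA) * (lB * mB)"
    have "N > 0" unfolding N_def using pos by simp
    have "int (nat (eL mod int N) mod N) = int (nat (eL mod int N)) mod int N" by (simp only: zmod_int)
    also have "\<dots> = eL mod int N" using \<open>N > 0\<close> by simp
    finally show ?thesis unfolding N_def nn .
  qed
  also have "\<dots> = ((th mod mm + ch mod mm) * L + s) mod (mm*L)" by (rule key)
  also have "\<dots> = int (((nat (th mod mm) + nat (ch mod mm)) * (lA * lB) + (g * lA + h * lB)) mod ((lA * mA) * (lB * mB)))"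
    using mpos tc unfolding nn[symmetric] by (simp add: zmod_int L_def s_def)
  finally show ?thesis unfolding eL_def th_def ch_def mm_def L_def nn[symmetric] by (simp add: algebra_simps)
qed

theorem lemma4:
  fixes A B :: "'a::{field, finite} list set"
    and lA mA lB mB :: nat and a b :: int
    and M :: "nat \<Rightarrow> nat \<Rightarrow> 'a"
  assumes "0 < lA" "0 < mA" "0 < lB" "0 < mB"
    and "quasi_cyclic lA mA A" and "quasi_cyclic lB mB B"
    and "coprime (lA * mA) (lB * mB)"
    and "a * int (lA * mA) + b * int (lB * mB) = 1"
    and "\<forall>i < lB * mB. map (M i) [0..<lA * mA] \<in> A"
    and "\<forall>j < lA * mA. map (\<lambda>i. M i j) [0..<lB * mB] \<in> B"
  shows "pcong_xn ((lA * mA) * (lB * mB))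
     (\<Sum>i < lB * mB. \<Sum>j < lA * mA.
        monom (M i j)
          (nat ((int i * a * int (lA * mA) * int lA + int j * b * int (lB * mB) * int lB)
                mod int ((lA * mA) * (lB * mB)))))
     (\<Sum>g < lB. \<Sum>h < lA.
        pcompose
          (monom 1 (nat ((int g * (- b * int mB) + int h * (- a * int mA)) mod int (mA * mB)))
           * (\<Sum>i < mB. \<Sum>j < mA.
                monom (M (i * lB + g) (j * lA + h))
                  (nat ((int i * a * int (lA * mA) + int j * b * int (lB * mB)) mod int (mA * mB)))))
          (monom 1 (lA * lB))
        * monom 1 (g * lA + h * lB))"
proof -
  note e = assms(8)
  note pos = assms(1-4)
  let ?n = "(lA * mA) * (lB * mB)"
  let ?F = "\<lambda>i j. monom (M i j)
          (nat ((int i * a * int (lA * mA) * int lA + int j * b * int (lB * mB) * int lB)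
                mod int ((lA * mA) * (lB * mB))))"
  let ?th = "\<lambda>g h. nat ((int g * (- b * int mB) + int h * (- a * int mA)) mod int (mA * mB))"
  let ?ch = "\<lambda>i j. nat ((int i * a * int (lA * mA) + int j * b * int (lB * mB)) mod int (mA * mB))"
  have L: "(\<Sum>i < lB * mB. \<Sum>j < lA * mA. ?F i j)
     = (\<Sum>g<lB. \<Sum>h<lA. \<Sum>i<mB. \<Sum>j<mA. ?F (i*lB+g) (j*lA+h))"
    by (simp only: sum_split[of _ lB mB] sum_split[of _ lA mA] sum.swap[of _ "{..<mB}" "{..<lA}"])
  have R: "pcompose (monom 1 (?th g h) * (\<Sum>i < mB. \<Sum>j < mA. monom (M (i * lB + g) (j * lA + h)) (?ch i j)))
          (monom 1 (lA * lB)) * monom 1 (g * lA + h * lB)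
     = (\<Sum>i<mB. \<Sum>j<mA. monom (M (i * lB + g) (j * lA + h)) ((?th g h + ?ch i j) * (lA * lB) + (g * lA + h * lB)))"
    for g h
    by (simp add: sum_distrib_left sum_distrib_right pcompose_sum mult_monom pcompose_monom_monom)
  show ?thesis
    unfolding L R
  proof (intro pcong_sum pcong_monom)
    fix g h i j
    show "nat ((int (i * lB + g) * a * int (lA * mA) * int lA + int (j * lA + h) * b * int (lB * mB) * int lB)
                mod int ((lA * mA) * (lB * mB))) mod ?n = ((?th g h + ?ch i j) * (lA * lB) + (g * lA + h * lB)) mod ?n"
      by (rule arith[OF e pos])
  qed
qed

end
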